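(* Let $\mathrm{Gr}$ be the covering-space relative $\mathbb{Q}$-grading on $\widehat{HF}(-L(p,q))$. For $0\leq i<p$, $$\mathrm{Gr}(x_{i+q\!\!\mod p},x_i)={1\over p}(p-1-2i).$$
   Context: $p>q$ are relatively prime positive integers. $-L(p,q)$ has the pointed Heegaard diagram with $\Sigma$ the torus $[0,1]\times[0,1]$ with edges identified, $\alpha$ the horizontal circle $y=1/2$, $\beta$ a circle of slope $-p/q$, and $z$ a point below $y=1/2$. The $p$ regions are $D_0,\ldots,D_{p-1}$ left to right with $z\in D_0$, and the $p$ points of $\alpha\cap\beta$ are $x_0,\ldots,x_{p-1}$ left to right along $\alpha$, with $x_0$ the upper right vertex of $D_0$. The differential vanishes so $\widehat{CF}=\widehat{HF}(-L(p,q))$. $\mathrm{Gr}(\mathbf{x},\mathbf{y})=\frac1n\mathrm{gr}(\tilde{\mathbf{x}},\tilde{\mathbf{y}})$ for any $n$-fold cover on which the lifted generators have equal $\mathrm{Spin}^c$ structure; equivalently $\mathrm{Gr}(\mathbf{x},\mathbf{y})=\frac1n[e(A)+n_\mathbf{x}(A)+n_\mathbf{y}(A)]$ for any basepoint-avoiding domain $A$ with $\partial\partial_\alpha A=n\mathbf{y}-n\mathbf{x}$. *)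

theory Defs
  imports Complex_Main
begin

text \<open>Combinatorial model of the pointed Heegaard diagram for -L(p,q)
 (torus, alpha horizontal at y=1/2, beta of slope -p/q).
 Regions D_0..D_{p-1} (indices mod p), intersection points x_0..x_{p-1}
 (indices mod p, left to right along alpha).  The alpha circle is cut into the
 p edges e_m = [x_{m-1}, x_m] (m mod p), oriented left to right.
 Region D_j lies directly below edge e_j and directly above edge e_{j+q}.
 A domain is an integer combination of regions, given by its coefficient
 function (only the values at 0..p-1 matter).\<close>

text \<open>Each region is an embedded quadrilateral (a disc) with four convex corners.\<close>
definition region_euler_char :: "nat \<Rightarrow> nat \<Rightarrow> nat \<Rightarrow> real" where
  "region_euler_char p q j = 1"

definition region_convex_corners :: "nat \<Rightarrow> nat \<Rightarrow> nat \<Rightarrow> nat" where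
  "region_convex_corners p q j = 4"

definition euler_measure :: "nat \<Rightarrow> nat \<Rightarrow> (nat \<Rightarrow> int) \<Rightarrow> real" where
  "euler_measure p q A =
     (\<Sum>j<p. of_int (A j) * (region_euler_char p q j - real (region_convex_corners p q j) / 4))"

text \<open>Point measure n_{x_k}(A): average of the coefficients of the four quadrants at x_k:
 below-left D_k, below-right D_{k+1}, above-left D_{k-q}, above-right D_{k+1-q}.\<close>
definition point_measure :: "nat \<Rightarrow> nat \<Rightarrow> (nat \<Rightarrow> int) \<Rightarrow> nat \<Rightarrow> real" where
  "point_measure p q A k =
     (of_int (A (k mod p)) + of_int (A ((k + 1) mod p))
      + of_int (A ((k + p - q) mod p)) + of_int (A ((k + 1 + p - q) mod p))) / 4"

text \<open>Alpha part of the boundary of A, as coefficient on edge e_m: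
 the region below e_m (namely D_m) traverses it right-to-left, the region above
 (namely D_{m-q}) traverses it left-to-right.\<close>
definition alpha_boundary :: "nat \<Rightarrow> nat \<Rightarrow> (nat \<Rightarrow> int) \<Rightarrow> nat \<Rightarrow> int" where
  "alpha_boundary p q A m = A ((m + p - q) mod p) - A (m mod p)"

text \<open>Boundary of the alpha-boundary, as a coefficient on x_k: d e_m = x_m - x_{m-1}.\<close>
definition dd_alpha :: "nat \<Rightarrow> nat \<Rightarrow> (nat \<Rightarrow> int) \<Rightarrow> nat \<Rightarrow> int" where
  "dd_alpha p q A k = alpha_boundary p q A (k mod p) - alpha_boundary p q A ((k + 1) mod p)"

text \<open>Basepoint z lies in D_0.\<close>
definition basepoint_avoiding :: "(nat \<Rightarrow> int) \<Rightarrow> bool" where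
  "basepoint_avoiding A \<longleftrightarrow> A 0 = 0"

definition Gr :: "nat \<Rightarrow> nat \<Rightarrow> nat \<Rightarrow> nat \<Rightarrow> real" where
  "Gr p q a b = (THE r. \<exists>n::nat. n > 0 \<and> (\<exists>A. basepoint_avoiding A \<and>
      (\<forall>k<p. dd_alpha p q A k = int n * ((if k = b then 1 else 0) - (if k = a then 1 else 0))) \<and>
      r = (euler_measure p q A + point_measure p q A a + point_measure p q A b) / real n))"

end

theory Submission
  imports Defs
begin

lemma B_mod:
  assumes "q < p"
  shows "alpha_boundary p q D (m mod p) = alpha_boundary p q D m"
  unfolding alpha_boundary_def
  by (metis assms add.commute less_imp_le_nat mod_add_left_eq mod_mod_trivial Nat.add_diff_assoc)

lemma kernel:
  fixes D :: "nat \<Rightarrow> int"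
  assumes q0: "0 < q" and qp: "q < p" and cop: "coprime p q" and D0: "D 0 = 0"
    and dd: "\<forall>k<p. dd_alpha p q D k = 0"
  shows "\<forall>m<p. D m = 0"
proof -
  have p0: "0 < p" using qp by simp
  let ?B = "alpha_boundary p q D"
  have s1: "\<forall>k<p. ?B k = ?B 0"
  proof (intro allI impI)
    fix k assume "k < p"
    then show "?B k = ?B 0"
    proof (induction k)
      case 0 then show ?case by simp
    next
      case (Suc k)
      have "dd_alpha p q D k = 0" using dd Suc by simp
      then have "?B (k mod p) = ?B ((k+1) mod p)" unfolding dd_alpha_def by simp
      then have "?B k = ?B (Suc k)" using B_mod[OF qp] by simp
      then show ?case using Suc by simp
    qed
  qed
  define c where "c = ?B 0"
  have s2: "?B m = c" for m
    using s1 B_mod[OF qp, of D m] p0 c_def by (metis mod_less_divisor)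
  have s3: "D ((k*q) mod p) - D (((k+1)*q) mod p) = c" for k
  proof -
    have "?B ((k*q) mod p + q) = c" by (rule s2)
    moreover have "((k*q) mod p + q + p - q) mod p = (k*q) mod p"
      by simp
    moreover have "((k*q) mod p + q) mod p = ((k+1)*q) mod p"
      by (simp add: mod_add_left_eq mod_add_right_eq add.commute)
    ultimately show ?thesis unfolding alpha_boundary_def by simp
  qed
  have s4: "D ((k*q) mod p) = - int k * c" for k
  proof (induction k)
    case 0 then show ?case using D0 by simp
  next
    case (Suc k) then show ?case using s3[of k] by (simp add: algebra_simps)
  qed
  have "D ((p*q) mod p) = 0" using D0 by simp
  then have "int p * c = 0" using s4[of p] by simp
  then have c0: "c = 0" using p0 by simp
  obtain x y where xy: "q * x = p * y + gcd q p" using bezout_nat[of q p] q0 by auto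
  have g1: "gcd q p = 1" using cop by (simp add: coprime_iff_gcd_eq_1 gcd.commute)
  show ?thesis
  proof (intro allI impI)
    fix m assume mp: "m < p"
    have "((x*m)*q) mod p = (p*y*m + m) mod p" using xy g1
      by (metis add_mult_distrib mult.commute mult.left_commute nat_mult_1)
    also have "\<dots> = m" using mp by (simp add: mult.assoc)
    finally show "D m = 0" using s4[of "x*m"] c0 by simp
  qed
qed

definition Fm :: "nat \<Rightarrow> nat \<Rightarrow> int \<Rightarrow> int" where
  "Fm p i y = (y - int i - 1) mod int p"

definition A0 :: "nat \<Rightarrow> nat \<Rightarrow> nat \<Rightarrow> int" where
  "A0 p i m = int p - 1 - int i - Fm p i (int m)"

lemma Fm_mod: "Fm p i (int (x mod p)) = Fm p i (int x)"
proof -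
  have "(int x mod int p - (int i + 1)) mod int p = (int x - (int i + 1)) mod int p"
    by (rule mod_diff_left_eq)
  then show ?thesis unfolding Fm_def by (simp add: of_nat_mod algebra_simps)
qed

lemma A0_mod: "A0 p i (x mod p) = A0 p i x"
  unfolding A0_def using Fm_mod by simp

lemma Fm_p: "Fm p i (y + int p) = Fm p i y"
proof -
  have "(y - int i - 1 + int p) mod int p = (y - int i - 1) mod int p" by simp
  then show ?thesis unfolding Fm_def by (simp add: algebra_simps)
qed

lemma small_mod:
  fixes z :: int
  assumes "- int p \<le> z" "z < int p"
  shows "z mod int p = (if z \<ge> 0 then z else z + int p)"
proof (cases "z \<ge> 0")
  case True then show ?thesis using assms by simp
next
  case False
  have "z mod int p = (z + int p) mod int p" by simp
  also have "\<dots> = z + int p" using assms False by (intro mod_pos_pos_trivial) auto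
  finally show ?thesis using False by simp
qed

lemma Fm_range: "0 < p \<Longrightarrow> 0 \<le> Fm p i y \<and> Fm p i y < int p"
  unfolding Fm_def by simp

lemma Fm_sub:
  assumes "0 < p" "c \<le> p"
  shows "Fm p i (y - int c) = (if Fm p i y \<ge> int c then Fm p i y - int c else Fm p i y - int c + int p)"
proof -
  have "Fm p i (y - int c) = (Fm p i y - int c) mod int p"
    unfolding Fm_def by (simp add: mod_diff_left_eq algebra_simps)
  also have "\<dots> = (if Fm p i y \<ge> int c then Fm p i y - int c else Fm p i y - int c + int p)"
    using Fm_range[OF assms(1), of i y] assms by (subst small_mod) auto
  finally show ?thesis .
qed

lemma B0:
  assumes "0 < q" "q < p"
  shows "alpha_boundary p q (A0 p i) m = int q - (if Fm p i (int m) < int q then int p else 0)"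
proof -
  have "alpha_boundary p q (A0 p i) m = A0 p i (m + p - q) - A0 p i m"
    unfolding alpha_boundary_def by (simp add: A0_mod)
  also have "\<dots> = Fm p i (int m) - Fm p i (int m - int q + int p)"
    unfolding A0_def using assms by (simp add: of_nat_diff algebra_simps)
  also have "\<dots> = Fm p i (int m) - Fm p i (int m - int q)"
    by (simp only: Fm_p)
  also have "\<dots> = int q - (if Fm p i (int m) < int q then int p else 0)"
    using Fm_sub[of p q i "int m"] assms by auto
  finally show ?thesis .
qed

lemma dd0:
  assumes "0 < q" "q < p" "i < p" "k < p"
  shows "dd_alpha p q (A0 p i) k = int p * ((if k = i then 1 else 0) - (if k = (i+q) mod p then 1 else 0))"
proof -
  have p0: "0 < p" using assms by simp
  define t where "t = Fm p i (int (k+1))"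
  have ht: "t = (if k \<ge> i then int k - int i else int k - int i + int p)"
    unfolding t_def Fm_def using assms by (subst small_mod) auto
  have "Fm p i (int k) = Fm p i (int (k+1) - int 1)" by simp
  also have "\<dots> = (if t \<ge> 1 then t - 1 else t - 1 + int p)"
    unfolding t_def using Fm_sub[of p 1 i "int (k+1)"] assms by simp
  finally have hk: "Fm p i (int k) = (if t \<ge> 1 then t - 1 else t - 1 + int p)" .
  have ha: "(i+q) mod p = (if i+q < p then i+q else i+q-p)"
    using assms by (simp add: le_mod_geq)
  have "dd_alpha p q (A0 p i) k = alpha_boundary p q (A0 p i) k - alpha_boundary p q (A0 p i) (k+1)"
    unfolding dd_alpha_def using B_mod[OF assms(2)] by simp
  also have "\<dots> = (if t < int q then int p else 0) - (if Fm p i (int k) < int q then int p else 0)"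
    using B0[OF assms(1,2)] t_def by simp
  also have "\<dots> = int p * ((if k = i then 1 else 0) - (if k = (i+q) mod p then 1 else 0))"
    using assms unfolding hk ht ha by auto
  finally show ?thesis .
qed

lemma Fm_modadd: "Fm p i (int (x mod p) + z) = Fm p i (int x + z)"
proof -
  have "(int x mod int p + (z - int i - 1)) mod int p = (int x + (z - int i - 1)) mod int p"
    by (rule mod_add_left_eq)
  then show ?thesis unfolding Fm_def by (simp add: of_nat_mod algebra_simps)
qed

lemma Fm_eval: "Fm p i (int i + z) = (z - 1) mod int p"
  unfolding Fm_def by (simp add: algebra_simps)

lemma pm_sum:
  assumes "0 < q" "q < p" "i < p"
  shows "point_measure p q (A0 p i) ((i+q) mod p) + point_measure p q (A0 p i) i
         = real p - 1 - 2 * real i"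
proof -
  define C where "C = int p - 1 - int i"
  define a where "a = (i+q) mod p"
  have p0: "0 < p" using assms by simp
  have e1: "A0 p i i = C - (int p - 1)"
    unfolding A0_def C_def using Fm_eval[of p i 0] small_mod[of p "-1"] p0 by simp
  have e2: "A0 p i ((i+1) mod p) = C"
    unfolding A0_mod unfolding A0_def C_def using Fm_eval[of p i 1] by (simp add: add.commute)
  have e3: "A0 p i ((i+p-q) mod p) = C - (int p - int q - 1)"
  proof -
    have "int (i+p-q) = int i + (int p - int q)" using assms by simp
    then show ?thesis unfolding A0_mod unfolding A0_def C_def
      using Fm_eval[of p i "int p - int q"] assms small_mod[of p "- 1 - int q"] by (simp add: algebra_simps)
  qed
  have e4: "A0 p i ((i+1+p-q) mod p) = C - (int p - int q)"
  proof -
    have "int (i+1+p-q) = int i + (int p - int q + 1)" using assms by simp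
    then show ?thesis unfolding A0_mod unfolding A0_def C_def
      using Fm_eval[of p i "int p - int q + 1"] assms small_mod[of p "- int q"] by (simp add: algebra_simps)
  qed
  have f1: "A0 p i (a mod p) = C - (int q - 1)"
  proof -
    have "A0 p i (a mod p) = A0 p i a" by (rule A0_mod)
    also have "\<dots> = C - Fm p i (int ((i+q) mod p) + 0)" unfolding A0_def C_def a_def by simp
    also have "\<dots> = C - (int q - 1)" unfolding Fm_modadd using Fm_eval[of p i "int q"] assms
      by (simp add: small_mod)
    finally show ?thesis .
  qed
  have f2: "A0 p i ((a+1) mod p) = C - int q"
  proof -
    have "A0 p i ((a+1) mod p) = A0 p i (a+1)" by (rule A0_mod)
    also have "\<dots> = C - Fm p i (int ((i+q) mod p) + 1)" unfolding A0_def C_def a_def by (simp add: add.commute)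
    also have "\<dots> = C - int q" unfolding Fm_modadd using Fm_eval[of p i "int q + 1"] assms
      by (simp add: add.assoc)
    finally show ?thesis .
  qed
  have f3: "A0 p i ((a+p-q) mod p) = C - (int p - 1)"
  proof -
    have "A0 p i ((a+p-q) mod p) = A0 p i (a+p-q)" by (rule A0_mod)
    also have "\<dots> = C - Fm p i (int ((i+q) mod p) + (int p - int q))"
      unfolding A0_def C_def a_def using assms by (simp add: of_nat_diff add_diff_eq)
    also have "\<dots> = C - (int p - 1)" unfolding Fm_modadd using Fm_eval[of p i "int p"] assms
      small_mod[of p "int p - 1"] by (simp add: algebra_simps)
    finally show ?thesis .
  qed
  have f4: "A0 p i ((a+1+p-q) mod p) = C"
  proof -
    have "A0 p i ((a+1+p-q) mod p) = A0 p i (a+1+p-q)" by (rule A0_mod)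
    also have "\<dots> = C - Fm p i (int ((i+q) mod p) + (int p - int q + 1))"
    proof -
      have "int (a+1+p-q) = int ((i+q) mod p) + (int p - int q + 1)" using assms a_def by simp
      then show ?thesis unfolding A0_def C_def by simp
    qed
    also have "\<dots> = C" unfolding Fm_modadd using Fm_eval[of p i "int p + 1"] assms
      by (simp add: algebra_simps)
    finally show ?thesis .
  qed
  have "i mod p = i" using assms by simp
  then show ?thesis unfolding point_measure_def a_def[symmetric]
    using e1 e2 e3 e4 f1 f2 f3 f4 unfolding C_def by (simp add: field_simps)
qed

lemma dd_lin: "dd_alpha p q (\<lambda>m. x * A m - y * E m) k = x * dd_alpha p q A k - y * dd_alpha p q E k"
  unfolding dd_alpha_def alpha_boundary_def by (simp add: algebra_simps)

lemma euler0: "euler_measure p q A = 0"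
  unfolding euler_measure_def region_euler_char_def region_convex_corners_def by simp

lemma pm_lin:
  assumes "\<forall>m. x * A (m mod p) = y * E (m mod p)"
  shows "real_of_int x * point_measure p q A k = real_of_int y * point_measure p q E k"
proof -
  have h: "real_of_int x * real_of_int (A (m mod p)) = real_of_int y * real_of_int (E (m mod p))" for m
    using assms by (metis of_int_mult)
  show ?thesis unfolding point_measure_def using h[of k] h[of "k+1"] h[of "k+p-q"] h[of "k+1+p-q"]
    by (simp add: field_simps)
qed

theorem proposition5p3:
  fixes p q i :: nat
  assumes "0 < q" and "q < p" and "coprime p q" and "i < p"
  shows "Gr p q ((i + q) mod p) i = (real p - 1 - 2 * real i) / real p"
proof -
  have p0: "0 < p" using assms by simp
  let ?a = "(i + q) mod p"
  let ?r = "(real p - 1 - 2 * real i) / real p"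
  have A00: "A0 p i 0 = 0"
    unfolding A0_def Fm_def using assms
    by (subst small_mod) auto
  have ddA0: "\<forall>k<p. dd_alpha p q (A0 p i) k = int p * ((if k = i then 1 else 0) - (if k = ?a then 1 else 0))"
    using dd0 assms by blast
  have rA0: "(euler_measure p q (A0 p i) + point_measure p q (A0 p i) ?a + point_measure p q (A0 p i) i) / real p = ?r"
    using pm_sum[OF assms(1,2,4)] euler0 by simp
  show ?thesis unfolding Gr_def
  proof (rule the_equality)
    show "\<exists>n::nat. n > 0 \<and> (\<exists>A. basepoint_avoiding A \<and>
      (\<forall>k<p. dd_alpha p q A k = int n * ((if k = i then 1 else 0) - (if k = ?a then 1 else 0))) \<and>
      ?r = (euler_measure p q A + point_measure p q A ?a + point_measure p q A i) / real n)"
      using p0 A00 ddA0 rA0 unfolding basepoint_avoiding_def by metis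
  next
    fix r assume "\<exists>n::nat. n > 0 \<and> (\<exists>A. basepoint_avoiding A \<and>
      (\<forall>k<p. dd_alpha p q A k = int n * ((if k = i then 1 else 0) - (if k = ?a then 1 else 0))) \<and>
      r = (euler_measure p q A + point_measure p q A ?a + point_measure p q A i) / real n)"
    then obtain n A where n0: "n > 0" and bA: "A 0 = 0"
      and ddA: "\<forall>k<p. dd_alpha p q A k = int n * ((if k = i then 1 else 0) - (if k = ?a then 1 else 0))"
      and rr: "r = (euler_measure p q A + point_measure p q A ?a + point_measure p q A i) / real n"
      unfolding basepoint_avoiding_def by blast
    define D where "D = (\<lambda>m. int p * A m - int n * A0 p i m)"
    have D0: "D 0 = 0" unfolding D_def using bA A00 by simp
    have ddD: "\<forall>k<p. dd_alpha p q D k = 0"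
      unfolding D_def dd_lin using ddA ddA0 by simp
    have Dz: "\<forall>m<p. D m = 0" by (rule kernel[OF assms(1,2,3) D0 ddD])
    have eq: "\<forall>m. int p * A (m mod p) = int n * A0 p i (m mod p)"
      using Dz p0 unfolding D_def by simp
    have e1: "real p * point_measure p q A k = real n * point_measure p q (A0 p i) k" for k
      using pm_lin[OF eq, of q k] by simp
    have "r = (point_measure p q A ?a + point_measure p q A i) / real n"
      using rr euler0 by simp
    also have "\<dots> = (real p * point_measure p q A ?a + real p * point_measure p q A i) / (real n * real p)"
      using p0 n0 by (simp add: field_simps)
    also have "\<dots> = (point_measure p q (A0 p i) ?a + point_measure p q (A0 p i) i) / real p"
      unfolding e1 using n0 p0 by (simp add: field_simps)
    also have "\<dots> = ?r" using pm_sum[OF assms(1,2,4)] by simp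
    finally show "r = ?r" .
  qed
qed

end
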